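(* Let $n\ge 2$, let $h=h^{(n)}$ be the ordered roots of $\mathrm{He}_n$ normalized to mean $0$ and variance $1$, and let $s=s_n(h)$. Then $s$ is an eigenvector of the Hermite coupling matrix $E_n$ with eigenvalue $2^{-1/2}$: $E_n s=2^{-1/2}s$.
   Context: For a monic polynomial with simple real roots $\alpha_1<\dots<\alpha_n$, the score vector is $s_n(\alpha)_i=\sum_{j\ne i}\frac{1}{\alpha_i-\alpha_j}$. The finite free additive convolution $\boxplus_n$ of monic real-rooted degree-$n$ polynomials $f(x)=\sum(-1)^ka_kx^{n-k}$, $g(x)=\sum(-1)^kb_kx^{n-k}$ is the polynomial with coefficients $c_k=\sum_{i+j=k}\frac{(n-i)!(n-j)!}{n!(n-k)!}a_ib_j$; the root map $\Omega_{\boxplus_n}(\alpha,\beta)$ returns the sorted roots of $f\boxplus_n g$ from the root vectors $\alpha,\beta$ of $f,g$. The Hermite coupling matrix is $E_n:=\frac{\partial\,\Omega_{\boxplus_n}(\cdot,h)}{\partial\alpha}\big|_{\alpha=h}$. It is known that $\Omega_{\boxplus_n}(h,h)=\sqrt2\,h$. *)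

theory Defs
  imports "HOL-Analysis.Analysis" "HOL-Computational_Algebra.Polynomial"
begin

fun hermite_He :: "nat \<Rightarrow> real poly" where
  "hermite_He 0 = 1"
| "hermite_He (Suc 0) = [:0, 1:]"
| "hermite_He (Suc (Suc k)) =
     [:0, 1:] * hermite_He (Suc k) - smult (real (Suc k)) (hermite_He k)"

text \<open>Sorted (ascending, with multiplicity) list of real roots of a real-rooted polynomial.
  Vectors of length n are functions nat => real, only indices i < n matter.\<close>
definition sorted_roots :: "real poly \<Rightarrow> nat \<Rightarrow> real" where
  "sorted_roots p = (\<lambda>i. (THE xs. sorted xs \<and> length xs = degree p \<and>
       p = smult (lead_coeff p) (\<Prod>x\<leftarrow>xs. [:- x, 1:])) ! i)"

definition root_poly :: "nat \<Rightarrow> (nat \<Rightarrow> real) \<Rightarrow> real poly" where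
  "root_poly n \<alpha> = (\<Prod>i<n. [:- \<alpha> i, 1:])"

text \<open>a_k with f(x) = sum_k (-1)^k a_k x^(n-k).\<close>
definition sgn_coeff :: "nat \<Rightarrow> real poly \<Rightarrow> nat \<Rightarrow> real" where
  "sgn_coeff n f k = (-1) ^ k * coeff f (n - k)"

definition ffconv :: "nat \<Rightarrow> real poly \<Rightarrow> real poly \<Rightarrow> real poly" where
  "ffconv n f g = (\<Sum>k\<le>n. monom ((-1) ^ k *
      (\<Sum>i\<le>k. (fact (n - i) * fact (n - (k - i)) / (fact n * fact (n - k)))
               * sgn_coeff n f i * sgn_coeff n g (k - i))) (n - k))"

definition Omega :: "nat \<Rightarrow> (nat \<Rightarrow> real) \<Rightarrow> (nat \<Rightarrow> real) \<Rightarrow> nat \<Rightarrow> real" where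
  "Omega n \<alpha> \<beta> = sorted_roots (ffconv n (root_poly n \<alpha>) (root_poly n \<beta>))"

definition herm_norm :: "nat \<Rightarrow> nat \<Rightarrow> real" where
  "herm_norm n = (let r = sorted_roots (hermite_He n);
                      m = (\<Sum>i<n. r i) / real n;
                      v = (\<Sum>i<n. (r i - m)\<^sup>2) / real n
                  in (\<lambda>i. (r i - m) / sqrt v))"

definition score :: "nat \<Rightarrow> (nat \<Rightarrow> real) \<Rightarrow> nat \<Rightarrow> real" where
  "score n \<alpha> i = (\<Sum>j\<in>{..<n} - {i}. 1 / (\<alpha> i - \<alpha> j))"

definition perturb :: "(nat \<Rightarrow> real) \<Rightarrow> nat \<Rightarrow> real \<Rightarrow> nat \<Rightarrow> real" where
  "perturb \<alpha> j t = (\<lambda>k. \<alpha> k + (if k = j then t else 0))"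

definition hermite_coupling :: "nat \<Rightarrow> nat \<Rightarrow> nat \<Rightarrow> real" where
  "hermite_coupling n i j =
     deriv (\<lambda>t. Omega n (perturb (herm_norm n) j t) (herm_norm n) i) 0"

end

theory Submission
  imports Defs
begin

lemma prod_lin_dvd:
  fixes z :: "nat \<Rightarrow> real"
  assumes inc: "\<And>i j. i < j \<Longrightarrow> j < n \<Longrightarrow> z i < z j"
    and r: "\<And>i. i < n \<Longrightarrow> poly p (z i) = 0"
  shows "m \<le> n \<Longrightarrow> (\<Prod>i<m. [:-z i,1:]) dvd p"
proof (induction m)
  case 0 then show ?case by simp
next
  case (Suc m)
  then obtain q where q: "p = (\<Prod>i<m. [:-z i,1:]) * q" by (auto elim: dvdE)
  have ne: "\<And>i. i < m \<Longrightarrow> - z i + z m \<noteq> 0" using inc Suc.prems by fastforce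
  have "poly (\<Prod>i<m. [:-z i,1:]) (z m) \<noteq> 0"
    using ne by (simp add: poly_prod)
  moreover have "poly p (z m) = 0" using r Suc.prems by simp
  ultimately have "poly q (z m) = 0" using q by simp
  then have "[:-z m,1:] dvd q" by (simp add: dvd_iff_poly_eq_0)
  then obtain q' where "q = [:-z m,1:] * q'" by (auto elim: dvdE)
  then have "p = (\<Prod>i<Suc m. [:-z i,1:]) * q'" using q by (simp only: prod.lessThan_Suc mult.assoc)
  then show ?case by (rule dvdI)
qed

lemma roots_char:
  fixes z :: "nat \<Rightarrow> real"
  assumes lc: "lead_coeff p = 1" and dg: "degree p = n"
    and inc: "\<And>i j. i < j \<Longrightarrow> j < n \<Longrightarrow> z i < z j"
    and r: "\<And>i. i < n \<Longrightarrow> poly p (z i) = 0"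
  shows "p = (\<Prod>i<n. [:-z i,1:])"
proof -
  obtain q where q: "p = (\<Prod>i<n. [:-z i,1:]) * q"
    using prod_lin_dvd[of n z p n] inc r by (auto elim: dvdE)
  have pn: "(\<Prod>i<n. [:-z i,1:]) \<noteq> 0" by (simp add: prod_zero_iff)
  have dP: "degree (\<Prod>i<n. [:-z i,1:]) = n"
    by (simp add: degree_prod_eq_sum_degree)
  have lP: "lead_coeff (\<Prod>i<n. [:-z i,1:]) = 1" by (simp add: lead_coeff_prod)
  have "p \<noteq> 0" using lc by auto
  then have qn: "q \<noteq> 0" using q by auto
  have "degree p = n + degree q" using q pn qn dP by (simp add: degree_mult_eq)
  then have "degree q = 0" using dg by simp
  moreover have "lead_coeff q = 1" using lc q lP by (simp add: lead_coeff_mult)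
  ultimately have "q = 1"
    by (auto elim!: degree_eq_zeroE)
  then show ?thesis using q by simp
qed

lemma sorted_roots_prod:
  fixes z :: "nat \<Rightarrow> real"
  assumes inc: "\<And>i j. i < j \<Longrightarrow> j < n \<Longrightarrow> z i < z j" and i: "i < n"
  shows "sorted_roots (\<Prod>i<n. [:-z i,1:]) i = z i"
proof -
  define P where "P = (\<Prod>i<n. [:-z i,1:])"
  define L where "L = map z [0..<n]"
  have dP: "degree P = n" unfolding P_def
    by (simp add: degree_prod_eq_sum_degree)
  have lP: "lead_coeff P = 1" unfolding P_def by (simp add: lead_coeff_prod)
  have PL: "P = (\<Prod>x\<leftarrow>L. [:- x, 1:])"
    unfolding P_def L_def
    by (simp add: prod.distinct_set_conv_list[symmetric] lessThan_atLeast0 o_def)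
  have sL: "sorted_wrt (<) L" unfolding L_def
    using inc by (auto simp: sorted_wrt_iff_nth_less)
  have "(THE xs. sorted xs \<and> length xs = degree P \<and>
       P = smult (lead_coeff P) (\<Prod>x\<leftarrow>xs. [:- x, 1:])) = L"
  proof (rule the_equality)
    show "sorted L \<and> length L = degree P \<and> P = smult (lead_coeff P) (\<Prod>x\<leftarrow>L. [:- x, 1:])"
      using sL dP lP PL by (simp add: L_def strict_sorted_imp_sorted)
  next
    fix xs assume a: "sorted xs \<and> length xs = degree P \<and> P = smult (lead_coeff P) (\<Prod>x\<leftarrow>xs. [:- x, 1:])"
    have rs: "poly (\<Prod>x\<leftarrow>ys. [:- x, 1:]) (a::real) = 0 \<longleftrightarrow> a \<in> set ys" for ys a
    proof -
      have "poly (\<Prod>x\<leftarrow>ys. [:- x, 1:]) a = (\<Prod>x\<leftarrow>ys. a - x)" by (induction ys) (auto simp: algebra_simps)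
      then show ?thesis by (auto simp: prod_list_zero_iff)
    qed
    have "set xs = set L"
    proof -
      have "P = (\<Prod>x\<leftarrow>xs. [:- x, 1:])" using a lP by simp
      then show ?thesis using PL rs by (metis equalityI subsetI)
    qed
    moreover have dL: "distinct L" using sL by (simp add: strict_sorted_iff)
    moreover have "distinct xs"
      using a dP dL `set xs = set L` by (metis card_distinct distinct_card length_map length_upt L_def diff_zero)
    ultimately show "xs = L" using a sL
      by (metis sorted_distinct_set_unique strict_sorted_imp_sorted)
  qed
  then show ?thesis unfolding sorted_roots_def P_def[symmetric] L_def using i by simp
qed


lemma coeff_Dpow: "coeff ((pderiv^^j) (p::real poly)) q = coeff p (q+j) * fact (q+j) / fact q"
proof (induction j arbitrary: q)
  case 0 then show ?case by simp
next
  case (Suc j)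
  have "coeff ((pderiv^^Suc j) p) q = of_nat (Suc q) * coeff ((pderiv^^j) p) (Suc q)"
    by (simp add: coeff_pderiv)
  also have "\<dots> = of_nat (Suc q) * (coeff p (Suc q + j) * fact (Suc q + j) / fact (Suc q))"
    by (simp add: Suc.IH)
  also have "\<dots> = coeff p (q + Suc j) * fact (q + Suc j) / fact q"
    by (simp add: fact_Suc field_simps del: of_nat_Suc)
  finally show ?case .
qed

lemma Dpow_zero: "degree (p::real poly) < j \<Longrightarrow> (pderiv^^j) p = 0"
  by (rule poly_eqI) (simp add: coeff_Dpow coeff_eq_0)

lemma degree_Dpow: "degree ((pderiv^^j) (p::real poly)) \<le> degree p"
  by (rule degree_le) (simp add: coeff_Dpow coeff_eq_0)

lemma sum_rev_atMost: "(\<Sum>m\<le>n. g m) = (\<Sum>i\<le>(n::nat). g (n - i))"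
  by (rule sum.reindex_bij_witness[where i="\<lambda>i. n - i" and j="\<lambda>i. n - i"]) auto

lemma coeff_ffconv: "coeff (ffconv n f g) q = (if q \<le> n then
   (-1) ^ (n-q) * (\<Sum>i\<le>n-q. (fact (n - i) * fact (n - ((n-q) - i)) / (fact n * fact (n - (n-q))))
               * sgn_coeff n f i * sgn_coeff n g ((n-q) - i)) else 0)"
proof -
  have "coeff (ffconv n f g) q = (\<Sum>k\<le>n. if n - k = q then (-1) ^ k *
      (\<Sum>i\<le>k. (fact (n - i) * fact (n - (k - i)) / (fact n * fact (n - k)))
               * sgn_coeff n f i * sgn_coeff n g (k - i)) else 0)"
    unfolding ffconv_def coeff_sum coeff_monom by (rule refl)
  also have "\<dots> = (\<Sum>k\<le>n. if k = n - q \<and> q \<le> n then (-1) ^ k *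
      (\<Sum>i\<le>k. (fact (n - i) * fact (n - (k - i)) / (fact n * fact (n - k)))
               * sgn_coeff n f i * sgn_coeff n g (k - i)) else 0)"
    by (rule sum.cong) auto
  also have "\<dots> = (if q \<le> n then
   (-1) ^ (n-q) * (\<Sum>i\<le>n-q. (fact (n - i) * fact (n - ((n-q) - i)) / (fact n * fact (n - (n-q))))
               * sgn_coeff n f i * sgn_coeff n g ((n-q) - i)) else 0)"
    by (cases "q \<le> n") (simp_all only: sum.delta finite_atMost, simp_all)
  finally show ?thesis .
qed

lemma sign_cancel: "i \<le> k \<Longrightarrow> (-1::real)^k * ((-1)^i * (-1)^(k-i)) = 1"
proof -
  assume "i \<le> k"
  then have "(-1::real)^i * (-1)^(k-i) = (-1)^k" by (simp add: power_add[symmetric])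
  moreover have "(-1::real)^k * (-1)^k = 1" by (simp add: power_mult_distrib[symmetric])
  ultimately show ?thesis by simp
qed

lemma term_eq: "i \<le> k \<Longrightarrow> k \<le> n \<Longrightarrow> (c::real) * fact (n-i) / fact n * (coeff g (n - k + i) * fact (n - k + i) / fact (n - k))
  = (-1)^k * (fact (n - i) * fact (n - (k - i)) / (fact n * fact (n - k)) * ((-1)^i * c) * ((-1)^(k-i) * coeff g (n - (k - i))))"
proof -
  assume a: "i \<le> k" "k \<le> n"
  then have e: "n - (k - i) = n - k + i" by simp
  have "(-1::real)^k * ((-1)^i * (-1)^(k-i)) = 1" using sign_cancel a(1) .
  then show ?thesis unfolding e by (simp add: field_simps)
qed

lemma ffconv_D:
  assumes dg: "degree g \<le> n"
  shows "ffconv n f g = (\<Sum>m\<le>n. smult (coeff f m * fact m / fact n) ((pderiv^^(n-m)) g))"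
proof (rule poly_eqI)
  fix q
  have R: "coeff (\<Sum>m\<le>n. smult (coeff f m * fact m / fact n) ((pderiv^^(n-m)) g)) q
     = (\<Sum>m\<le>n. coeff f m * fact m / fact n * (coeff g (q + (n-m)) * fact (q+(n-m)) / fact q))"
    by (simp add: coeff_sum coeff_Dpow)
  show "coeff (ffconv n f g) q = coeff (\<Sum>m\<le>n. smult (coeff f m * fact m / fact n) ((pderiv^^(n-m)) g)) q"
  proof (cases "q \<le> n")
    case False
    then have "\<And>m. coeff g (q + (n-m)) = 0" using dg by (intro coeff_eq_0) simp
    then show ?thesis unfolding R coeff_ffconv using False
      by (simp only: if_False mult_zero_left mult_zero_right div_0 sum.neutral_const)
  next
    case True
    define k where "k = n - q"
    have q: "q = n - k" "k \<le> n" using True k_def by auto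
    have "(\<Sum>m\<le>n. coeff f m * fact m / fact n * (coeff g (q + (n-m)) * fact (q+(n-m)) / fact q))
        = (\<Sum>i\<le>n. coeff f (n-i) * fact (n-i) / fact n * (coeff g (q + i) * fact (q+i) / fact q))"
      by (subst sum_rev_atMost) (rule sum.cong, auto)
    also have "\<dots> = (\<Sum>i\<le>k. coeff f (n-i) * fact (n-i) / fact n * (coeff g (q + i) * fact (q+i) / fact q))"
    proof (rule sum.mono_neutral_right)
      show "\<forall>i\<in>{..n} - {..k}. coeff f (n-i) * fact (n-i) / fact n * (coeff g (q + i) * fact (q+i) / fact q) = 0"
        using dg q by (auto intro!: coeff_eq_0)
    qed (use q in auto)
    also have "\<dots> = (-1)^k * (\<Sum>i\<le>k. (fact (n - i) * fact (n - (k - i)) / (fact n * fact (n - k))) * sgn_coeff n f i * sgn_coeff n g (k - i))"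
      unfolding sum_distrib_left sgn_coeff_def q(1)
      by (rule sum.cong[OF refl], rule term_eq, use q in auto)
    also have "\<dots> = coeff (ffconv n f g) q"
      using True k_def by (simp only: coeff_ffconv if_True)
    finally show ?thesis unfolding R ..
  qed
qed

lemma ffconv_add: "degree g \<le> n \<Longrightarrow> ffconv n (f1 + f2) g = ffconv n f1 g + ffconv n f2 g"
  by (simp add: ffconv_D distrib_right add_divide_distrib smult_add_left sum.distrib)

lemma ffconv_smult: "degree g \<le> n \<Longrightarrow> ffconv n (smult c f) g = smult c (ffconv n f g)"
  by (rule poly_eqI) (simp add: ffconv_D coeff_sum sum_distrib_left mult_ac)

lemma ffconv_diff: "degree g \<le> n \<Longrightarrow> ffconv n (f1 - f2) g = ffconv n f1 g - ffconv n f2 g"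
  by (simp add: ffconv_D left_diff_distrib diff_divide_distrib smult_diff_left sum_subtractf)

lemma ffconv_zero: "degree g \<le> n \<Longrightarrow> ffconv n 0 g = 0"
  by (simp add: ffconv_D)

lemma ffconv_sum: assumes "degree g \<le> n" "finite S"
  shows "ffconv n (\<Sum>j\<in>S. F j) g = (\<Sum>j\<in>S. ffconv n (F j) g)"
  using assms(2) by (induction S rule: finite_induct) (simp_all add: ffconv_zero ffconv_add assms(1))

lemma degree_ffconv: "degree (ffconv n f g) \<le> n"
  by (rule degree_le) (simp add: coeff_ffconv)

lemma coeff_ffconv_n: "coeff (ffconv n f g) n = coeff f n * coeff g n"
  by (simp add: coeff_ffconv sgn_coeff_def)

lemma ffconv_monom: "degree g \<le> n \<Longrightarrow> ffconv n (monom 1 n) g = g"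
proof -
  assume dg: "degree g \<le> n"
  have "ffconv n (monom 1 n) g = (\<Sum>m\<le>n. if m = n then g else 0)"
    unfolding ffconv_D[OF dg] by (rule sum.cong[OF refl]) (auto simp: coeff_monom)
  then show ?thesis by simp
qed

lemma pderiv_sum: "pderiv (\<Sum>i\<in>S. F i) = (\<Sum>i\<in>S. pderiv (F i))"
  by (induction S rule: infinite_finite_induct) (simp_all add: pderiv_add)

lemma ffconv_pderiv:
  assumes df: "degree f \<le> n" and dg: "degree g \<le> n"
  shows "ffconv n (pderiv f) g = pderiv (ffconv n f g)"
proof -
  define T where "T m = smult (coeff f m * fact m / fact n) ((pderiv^^(Suc n - m)) g)" for m
  have T0: "T 0 = 0" unfolding T_def using dg Dpow_zero[of g "Suc n"] by simp
  have TS: "T (Suc n) = 0" unfolding T_def using df by (simp add: coeff_eq_0)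
  have "ffconv n (pderiv f) g = (\<Sum>m\<le>n. T (Suc m))"
    unfolding ffconv_D[OF dg] T_def
    by (rule sum.cong[OF refl]) (simp add: coeff_pderiv fact_Suc algebra_simps del: of_nat_Suc)
  also have "\<dots> = (\<Sum>m\<le>Suc n. T m)" by (subst sum.atMost_Suc_shift) (simp add: T0)
  also have "\<dots> = (\<Sum>m\<le>n. T m)" by (simp add: TS)
  also have "\<dots> = pderiv (ffconv n f g)"
    unfolding ffconv_D[OF dg] pderiv_sum T_def
    by (rule sum.cong[OF refl]) (simp add: pderiv_smult Suc_diff_le)
  finally show ?thesis .
qed

lemma ffconv_Dpow_monom: "degree g \<le> n \<Longrightarrow> ffconv n ((pderiv^^j) (monom 1 n)) g = (pderiv^^j) g"
proof (induction j)
  case 0 then show ?case by (simp add: ffconv_monom)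
next
  case (Suc j)
  have "degree ((pderiv^^j) (monom (1::real) n)) \<le> n" using degree_Dpow[of j "monom 1 n"] by (simp add: degree_monom_eq)
  then show ?case using Suc by (simp add: ffconv_pderiv)
qed


definition Gp :: "nat \<Rightarrow> real \<Rightarrow> real poly" where
  "Gp n a = (\<Sum>k\<le>n. smult (a^k / fact k) ((pderiv^^(2*k)) (monom 1 n)))"

lemma coeff_Dpow_monom: "coeff ((pderiv^^j) (monom (1::real) n)) q = (if q + j = n then fact n / fact q else 0)"
  by (simp add: coeff_Dpow coeff_monom)

lemma coeff_Gp: "coeff (Gp n a) q = (\<Sum>k\<le>n. if q + 2*k = n then a^k / fact k * (fact n / fact q) else 0)"
  unfolding Gp_def coeff_sum by (rule sum.cong[OF refl]) (simp add: coeff_Dpow_monom)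

lemma coeff_Gp_n: "coeff (Gp n a) n = 1"
proof -
  have "coeff (Gp n a) n = (\<Sum>k\<le>n. if k = 0 then 1 else 0)"
    unfolding coeff_Gp by (rule sum.cong[OF refl]) auto
  then show ?thesis by simp
qed

lemma coeff_Gp_gt: "n < q \<Longrightarrow> coeff (Gp n a) q = 0"
  unfolding coeff_Gp by (rule sum.neutral) auto

lemma degree_Gp: "degree (Gp n a) = n"
proof (rule antisym)
  show "degree (Gp n a) \<le> n" by (rule degree_le) (simp add: coeff_Gp_gt)
  show "n \<le> degree (Gp n a)" using coeff_Gp_n by (metis le_degree zero_neq_one)
qed

lemma lead_Gp: "lead_coeff (Gp n a) = 1"
  by (simp add: degree_Gp coeff_Gp_n)

lemma coeff_Gp_pred: assumes "1 \<le> n" shows "coeff (Gp n a) (n - 1) = 0"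
proof -
  have "\<forall>k. n - 1 + 2*k \<noteq> n" using assms by presburger
  then show ?thesis unfolding coeff_Gp by (intro sum.neutral) auto
qed

lemma smult_sum_right: "smult c (\<Sum>i\<in>S. F i) = (\<Sum>i\<in>S. smult c (F i))"
  by (induction S rule: infinite_finite_induct) (simp_all add: smult_add_right)

lemma Gp_scale:
  assumes c: "c \<noteq> 0"
  shows "pcompose (Gp n a) [:0, c:] = smult (c^n) (Gp n (a / c^2))"
proof (rule poly_eqI)
  fix q
  show "coeff (pcompose (Gp n a) [:0, c:]) q = coeff (smult (c^n) (Gp n (a / c^2))) q"
    unfolding coeff_pcompose_linear coeff_smult coeff_Gp sum_distrib_left
  proof (rule sum.cong[OF refl])
    fix k
    show "c ^ q * (if q + 2 * k = n then a ^ k / fact k * (fact n / fact q) else 0) =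
         c ^ n * (if q + 2 * k = n then (a / c\<^sup>2) ^ k / fact k * (fact n / fact q) else 0)"
    proof (cases "q + 2 * k = n")
      case True
      then have "c^n = c^q * (c^2)^k" by (metis power_add power_mult)
      then show ?thesis using True c by (simp add: power_divide field_simps)
    qed simp
  qed
qed

lemma Dpow_sum: "(pderiv^^j) (\<Sum>i\<in>S. F i) = (\<Sum>i\<in>S. (pderiv^^j) (F i))"
  by (induction j) (simp_all add: pderiv_sum)

lemma Dpow_smult: "(pderiv^^j) (smult c p) = smult c ((pderiv^^j) p)"
  by (induction j) (simp_all add: pderiv_smult)

lemma ffconv_Gp: "degree g \<le> n \<Longrightarrow> ffconv n (Gp n a) g = (\<Sum>k\<le>n. smult (a^k / fact k) ((pderiv^^(2*k)) g))"
  unfolding Gp_def by (simp add: ffconv_sum ffconv_smult ffconv_Dpow_monom)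

lemma Gp_add: "ffconv n (Gp n a) (Gp n b) = Gp n (a + b)"
proof -
  define W where "W p = (pderiv^^(2*p)) (monom (1::real) n)" for p
  define f where "f k l = smult (a^k / fact k * (b^l / fact l)) (W (k + l))" for k l
  have W0: "W p = 0" if "n < p" for p
    unfolding W_def using that by (intro Dpow_zero) (simp add: degree_monom_eq)
  have "ffconv n (Gp n a) (Gp n b) = (\<Sum>k\<le>n. \<Sum>l\<le>n. f k l)"
    unfolding ffconv_Gp[OF eq_imp_le[OF degree_Gp]]
    unfolding Gp_def Dpow_sum Dpow_smult smult_sum_right
  proof (intro sum.cong refl)
    fix k l
    have "(pderiv ^^ (2 * k)) ((pderiv ^^ (2 * l)) (monom 1 n)) = W (k + l)"
      unfolding W_def distrib_left funpow_add o_apply ..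
    then show "smult (a ^ k / fact k) (smult (b ^ l / fact l) ((pderiv ^^ (2 * k)) ((pderiv ^^ (2 * l)) (monom 1 n)))) = f k l"
      by (simp add: f_def)
  qed
  also have "\<dots> = (\<Sum>(k,l)\<in>{..n}\<times>{..n}. f k l)" by (rule sum.cartesian_product)
  also have "\<dots> = (\<Sum>(k,l)\<in>{(k,l). k + l \<le> n}. f k l)"
  proof (rule sum.mono_neutral_right)
    show "finite ({..n}\<times>{..n})" by simp
    show "{(k,l). k + l \<le> n} \<subseteq> {..n}\<times>{..n}" by auto
    show "\<forall>i\<in>{..n}\<times>{..n} - {(k,l). k + l \<le> n}. (case i of (k,l) \<Rightarrow> f k l) = 0"
      using W0 by (auto simp: f_def) (metis not_le)
  qed
  also have "\<dots> = (\<Sum>p\<le>n. \<Sum>k\<le>p. f k (p - k))" by (rule sum.triangle_reindex_eq)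
  also have "\<dots> = (\<Sum>p\<le>n. smult ((a+b)^p / fact p) (W p))"
  proof (rule sum.cong[OF refl])
    fix p
    have "(a+b)^p / fact p = (\<Sum>k\<le>p. a^k / fact k * (b^(p-k) / fact (p-k)))"
      unfolding binomial_ring sum_divide_distrib
      by (rule sum.cong[OF refl]) (simp add: binomial_fact field_simps)
    then show "(\<Sum>k\<le>p. f k (p - k)) = smult ((a+b)^p / fact p) (W p)"
      by (simp add: f_def smult_sum)
  qed
  also have "\<dots> = Gp n (a + b)" unfolding Gp_def W_def ..
  finally show ?thesis .
qed


lemma Dpow_xmult: "(pderiv^^(Suc j)) ([:0,1:] * p) = [:0,1:] * (pderiv^^(Suc j)) p + smult (of_nat (Suc j)) ((pderiv^^j) (p::real poly))"
proof (induction j)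
  case 0 then show ?case by (simp add: pderiv_mult pderiv_pCons)
next
  case (Suc j)
  have "(pderiv^^(Suc (Suc j))) ([:0,1:] * p) = pderiv ((pderiv^^(Suc j)) ([:0,1:] * p))" by simp
  also have "\<dots> = [:0,1:] * (pderiv^^(Suc (Suc j))) p + (pderiv^^(Suc j)) p + smult (of_nat (Suc j)) ((pderiv^^(Suc j)) p)"
    unfolding Suc by (simp add: pderiv_add pderiv_mult pderiv_smult pderiv_pCons)
  also have "\<dots> = [:0,1:] * (pderiv^^(Suc (Suc j))) p + smult (of_nat (Suc (Suc j))) ((pderiv^^(Suc j)) p)"
    by (simp only: of_nat_Suc smult_add_left smult_1_left add.assoc)
  finally show ?case .
qed

lemma x_monom: "[:0,1:] * monom (1::real) n = monom 1 (Suc n)"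
  by (simp add: monom_Suc)

lemma pderiv_monom1: "pderiv (monom (1::real) (Suc n)) = smult (of_nat (Suc n)) (monom 1 n)"
  by (simp add: pderiv_monom smult_monom)

lemma x_Dpow_monom:
  "[:0,1:] * (pderiv^^(2*Suc k)) (monom (1::real) (Suc n))
   = (pderiv^^(2*Suc k)) (monom 1 (Suc (Suc n))) - smult (of_nat (2*Suc k) * of_nat (Suc n)) ((pderiv^^(2*k)) (monom 1 n))"
proof -
  have e: "2 * Suc k = Suc (Suc (2*k))" by simp
  have "(pderiv^^(Suc (2*k))) (monom (1::real) (Suc n)) = (pderiv^^(2*k)) (pderiv (monom 1 (Suc n)))"
    by (simp add: funpow_swap1)
  also have "\<dots> = smult (of_nat (Suc n)) ((pderiv^^(2*k)) (monom 1 n))"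
    by (simp add: pderiv_monom1 Dpow_smult)
  finally have a: "(pderiv^^(Suc (2*k))) (monom (1::real) (Suc n)) = smult (of_nat (Suc n)) ((pderiv^^(2*k)) (monom 1 n))" .
  have "(pderiv^^(2*Suc k)) (monom 1 (Suc (Suc n))) = (pderiv^^(Suc (Suc (2*k)))) ([:0,1:] * monom (1::real) (Suc n))"
    by (simp only: e x_monom)
  also have "\<dots> = [:0,1:] * (pderiv^^(Suc (Suc (2*k)))) (monom 1 (Suc n)) + smult (of_nat (Suc (Suc (2*k)))) ((pderiv^^(Suc (2*k))) (monom 1 (Suc n)))"
    by (rule Dpow_xmult)
  also have "\<dots> = [:0,1:] * (pderiv^^(2*Suc k)) (monom 1 (Suc n)) + smult (of_nat (2*Suc k) * of_nat (Suc n)) ((pderiv^^(2*k)) (monom 1 n))"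
    by (simp only: a smult_smult e)
  finally show ?thesis by simp
qed

lemma aux_div: "(f::real) \<noteq> 0 \<Longrightarrow> m \<noteq> 0 \<Longrightarrow> x / (f*m) * (2*m*N) = 2*N*(x/f)"
  by (simp add: field_simps)

lemma Gp_rec: "Gp (Suc (Suc n)) a = [:0,1:] * Gp (Suc n) a + smult (2 * a * of_nat (Suc n)) (Gp n a)"
proof -
  define c where "c k = a^k / fact k" for k
  define T where "T k = smult (c k) ((pderiv^^(2*k)) (monom (1::real) (Suc (Suc n))))" for k
  define U where "U k = smult (c (Suc k) * (of_nat (2*Suc k) * of_nat (Suc n))) ((pderiv^^(2*k)) (monom (1::real) n))" for k
  have TZ: "T (Suc (Suc n)) = 0" unfolding T_def by (subst Dpow_zero) (auto simp: degree_monom_eq)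
  have "[:0,1:] * Gp (Suc n) a = (\<Sum>k\<le>Suc n. smult (c k) ([:0,1:] * (pderiv^^(2*k)) (monom 1 (Suc n))))"
    unfolding Gp_def c_def sum_distrib_left mult_smult_right ..
  also have "\<dots> = T 0 + (\<Sum>k\<le>n. T (Suc k) - U k)"
    unfolding sum.atMost_Suc_shift
  proof (rule arg_cong2[where f="(+)"])
    show "smult (c 0) ([:0, 1:] * (pderiv ^^ (2 * 0)) (monom 1 (Suc n))) = T 0"
      by (simp add: T_def c_def x_monom[symmetric])
    show "(\<Sum>k\<le>n. smult (c (Suc k)) ([:0, 1:] * (pderiv ^^ (2 * Suc k)) (monom 1 (Suc n)))) = (\<Sum>k\<le>n. T (Suc k) - U k)"
    proof (rule sum.cong[OF refl])
      fix k
      show "smult (c (Suc k)) ([:0, 1:] * (pderiv ^^ (2 * Suc k)) (monom 1 (Suc n))) = T (Suc k) - U k"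
        unfolding x_Dpow_monom T_def U_def smult_diff_right smult_smult ..
    qed
  qed
  also have "\<dots> = (\<Sum>k\<le>Suc (Suc n). T k) - (\<Sum>k\<le>n. U k)"
    by (simp only: sum.atMost_Suc_shift[of T "Suc n"] sum_subtractf) (simp add: TZ)
  also have "(\<Sum>k\<le>Suc (Suc n). T k) = Gp (Suc (Suc n)) a" unfolding Gp_def T_def c_def ..
  also have "(\<Sum>k\<le>n. U k) = smult (2 * a * of_nat (Suc n)) (Gp n a)"
    unfolding Gp_def smult_sum_right U_def
  proof (rule sum.cong[OF refl])
    fix k
    have "c (Suc k) * (of_nat (2*Suc k) * of_nat (Suc n)) = 2 * a * of_nat (Suc n) * (a^k / fact k)"
    proof -
      have f: "(fact k::real) \<noteq> 0" "(1 + real k) \<noteq> 0" by auto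
      have "c (Suc k) = a * a^k / (fact k * (1 + real k))" unfolding c_def by (simp add: fact_Suc mult.commute)
      moreover have "of_nat (2*Suc k) * of_nat (Suc n) = 2 * (1 + real k) * (1 + real n)" by simp
      ultimately have "c (Suc k) * (of_nat (2*Suc k) * of_nat (Suc n)) = 2 * (1 + real n) * (a * a^k / fact k)"
        using aux_div[OF f] by simp
      then show ?thesis by simp
    qed
    then show "smult (c (Suc k) * (of_nat (2 * Suc k) * of_nat (Suc n))) ((pderiv ^^ (2 * k)) (monom 1 n)) =
         smult (2 * a * of_nat (Suc n)) (smult (a ^ k / fact k) ((pderiv ^^ (2 * k)) (monom 1 n)))"
      by simp
  qed
  finally show ?thesis by (simp add: algebra_simps)
qed

lemma He_Gp: "hermite_He n = Gp n (-1/2)"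
proof (induction n rule: hermite_He.induct)
  case 1 then show ?case by (simp add: Gp_def)
next
  case 2
  have "(pderiv^^2) (monom (1::real) 1) = 0" by (rule Dpow_zero) (simp add: degree_monom_eq)
  then show ?case by (simp add: Gp_def monom_Suc)
next
  case (3 k)
  have "hermite_He (Suc (Suc k)) = [:0, 1:] * Gp (Suc k) (-1/2) - smult (real (Suc k)) (Gp k (-1/2))"
    using 3 by simp
  also have "\<dots> = [:0, 1:] * Gp (Suc k) (-1/2) + smult (2 * (-1/2) * of_nat (Suc k)) (Gp k (-1/2))"
  proof -
    have e: "(2 * (-1/2) * of_nat (Suc k)::real) = - real (Suc k)" by simp
    show ?thesis unfolding e smult_minus_left by simp
  qed
  finally show ?case by (simp only: Gp_rec)
qed


lemma degree_He: "degree (hermite_He n) = n" by (simp add: He_Gp degree_Gp)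
lemma lead_He: "lead_coeff (hermite_He n) = 1" by (simp add: He_Gp lead_Gp)

lemma pderiv_Gp: "pderiv (Gp (Suc m) a) = smult (of_nat (Suc m)) (Gp m a)"
proof -
  have Z: "(pderiv^^(2*Suc m)) (monom (1::real) m) = 0" by (rule Dpow_zero) (simp add: degree_monom_eq)
  have "pderiv (Gp (Suc m) a) = (\<Sum>k\<le>Suc m. smult (a^k / fact k) ((pderiv^^(2*k)) (pderiv (monom 1 (Suc m)))))"
    unfolding Gp_def pderiv_sum pderiv_smult by (simp add: funpow_swap1)
  also have "\<dots> = smult (of_nat (Suc m)) (\<Sum>k\<le>Suc m. smult (a^k / fact k) ((pderiv^^(2*k)) (monom 1 m)))"
    unfolding pderiv_monom1 Dpow_smult smult_sum_right by (simp add: mult.commute)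
  also have "\<dots> = smult (of_nat (Suc m)) (Gp m a)"
    by (simp only: Gp_def sum.atMost_Suc Z smult_0_right add_0_right)
  finally show ?thesis .
qed

lemma pderiv_He: "pderiv (hermite_He (Suc m)) = smult (of_nat (Suc m)) (hermite_He m)"
  by (simp add: He_Gp pderiv_Gp)

lemma He_parity: "poly (hermite_He n) (-x) = (-1)^n * poly (hermite_He n) x"
  by (induction n rule: hermite_He.induct) (simp_all add: algebra_simps)

lemma poly_pderiv_prod_at:
  fixes \<rho> :: "nat \<Rightarrow> real"
  assumes k: "k < n"
  shows "poly (pderiv (\<Prod>i<n. [:-\<rho> i,1:])) (\<rho> k) = (\<Prod>i\<in>{..<n}-{k}. \<rho> k - (\<rho> i::real))"
proof -
  have "poly (pderiv (\<Prod>i<n. [:-\<rho> i,1:])) (\<rho> k) = (\<Sum>a<n. \<Prod>i\<in>{..<n}-{a}. \<rho> k - \<rho> i)"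
    by (simp add: pderiv_prod poly_sum poly_prod pderiv_pCons)
  also have "\<dots> = (\<Sum>a<n. if a = k then (\<Prod>i\<in>{..<n}-{k}. \<rho> k - \<rho> i) else 0)"
  proof (rule sum.cong[OF refl])
    fix a assume a: "a \<in> {..<n}"
    show "(\<Prod>i\<in>{..<n}-{a}. \<rho> k - \<rho> i) = (if a = k then (\<Prod>i\<in>{..<n}-{k}. \<rho> k - \<rho> i) else 0)"
    proof (cases "a = k")
      case False
      then have "k \<in> {..<n}-{a}" using k by auto
      have "(\<Prod>i\<in>{..<n}-{a}. \<rho> k - \<rho> i) = 0" 
        using \<open>k \<in> {..<n}-{a}\<close> by (subst prod_zero_iff) auto
      then show ?thesis using False by simp
    qed simp
  qed
  also have "\<dots> = (\<Prod>i\<in>{..<n}-{k}. \<rho> k - \<rho> i)" using k by simp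
  finally show ?thesis .
qed

lemma prod_sign:
  fixes \<rho> :: "nat \<Rightarrow> real"
  assumes inc: "\<And>i j. i < j \<Longrightarrow> j < n \<Longrightarrow> \<rho> i < \<rho> j" and k: "k < n"
  shows "(-1)^(n - Suc k) * (\<Prod>i\<in>{..<n}-{k}. \<rho> k - \<rho> i) > 0"
proof -
  have split: "{..<n}-{k} = {..<k} \<union> {k<..<n}" using k by auto
  have P1: "(\<Prod>i\<in>{..<k}. \<rho> k - \<rho> i) > 0" using inc k by (intro prod_pos) auto
  have P2: "(\<Prod>i\<in>{k<..<n}. \<rho> i - \<rho> k) > 0" using inc by (intro prod_pos) auto
  have "(\<Prod>i\<in>{k<..<n}. \<rho> k - \<rho> i) = (\<Prod>i\<in>{k<..<n}. - (\<rho> i - \<rho> k))" by simp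
  also have "\<dots> = (-1)^(card {k<..<n}) * (\<Prod>i\<in>{k<..<n}. \<rho> i - \<rho> k)" by (rule prod_uminus)
  also have "\<dots> = (-1)^(n - Suc k) * (\<Prod>i\<in>{k<..<n}. \<rho> i - \<rho> k)" by simp
  finally have P3: "(\<Prod>i\<in>{k<..<n}. \<rho> k - \<rho> i) = (-1)^(n - Suc k) * (\<Prod>i\<in>{k<..<n}. \<rho> i - \<rho> k)" .
  have "(\<Prod>i\<in>{..<n}-{k}. \<rho> k - \<rho> i) = (\<Prod>i\<in>{..<k}. \<rho> k - \<rho> i) * (\<Prod>i\<in>{k<..<n}. \<rho> k - \<rho> i)"
    unfolding split by (rule prod.union_disjoint) auto
  then have "(-1)^(n - Suc k) * (\<Prod>i\<in>{..<n}-{k}. \<rho> k - \<rho> i)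
     = ((-1)^(n - Suc k) * (-1)^(n - Suc k)) * ((\<Prod>i\<in>{..<k}. \<rho> k - \<rho> i) * (\<Prod>i\<in>{k<..<n}. \<rho> i - \<rho> k))"
    unfolding P3 by (simp add: mult_ac)
  also have "(-1::real)^(n - Suc k) * (-1)^(n - Suc k) = 1" by (simp add: power_mult_distrib[symmetric])
  finally show ?thesis using P1 P2 by simp
qed

lemma He_roots:
  assumes "1 \<le> n"
  shows "\<exists>\<rho>. (\<forall>i j. i < j \<longrightarrow> j < n \<longrightarrow> \<rho> i < \<rho> j) \<and> hermite_He n = (\<Prod>i<n. [:-\<rho> i,1:])"
  using assms
proof (induction n rule: nat_induct_at_least)
  case base
  show ?case by (rule exI[of _ "\<lambda>_. 0"]) simp
next
  case (Suc n)
  then obtain \<rho> :: "nat \<Rightarrow> real" where inc: "\<And>i j. i < j \<Longrightarrow> j < n \<Longrightarrow> \<rho> i < \<rho> j"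
    and P: "hermite_He n = (\<Prod>i<n. [:-\<rho> i,1:])" by blast
  define H where "H = hermite_He (Suc n)"
  obtain m where m: "n = Suc m" using Suc.hyps by (cases n) auto
  have Hrec: "H = [:0,1:] * hermite_He n - pderiv (hermite_He n)"
    unfolding H_def m pderiv_He by simp
  have sg: "(-1)^(n-k) * poly H (\<rho> k) > 0" if k: "k < n" for k
  proof -
    have "poly H (\<rho> k) = - (\<Prod>i\<in>{..<n}-{k}. \<rho> k - \<rho> i)"
      using k unfolding Hrec by (simp add: P poly_pderiv_prod_at poly_prod) (use k in blast)
    moreover have "(-1::real) ^ (n-k) = - ((-1) ^ (n - Suc k))"
      using k by (simp add: Suc_diff_Suc[symmetric])
    ultimately show ?thesis using prod_sign[OF inc k] by simp
  qed
  have ee: "(-1::real)^j * (-1)^j = 1" for j by (simp add: power_mult_distrib[symmetric])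
  have mid: "poly H (\<rho> k) * poly H (\<rho> (Suc k)) < 0" if k: "Suc k < n" for k
  proof -
    define e :: real where "e = (-1)^(n - Suc k)"
    have e1: "(-1::real) ^ (n-k) = - e" unfolding e_def using k by (simp add: Suc_diff_Suc[symmetric])
    have a: "- e * poly H (\<rho> k) > 0" using sg[of k] k e1 by simp
    have b: "e * poly H (\<rho> (Suc k)) > 0" using sg[of "Suc k"] k unfolding e_def by simp
    have "(- e * poly H (\<rho> k)) * (e * poly H (\<rho> (Suc k))) = - (e * e) * (poly H (\<rho> k) * poly H (\<rho> (Suc k)))"
      by (simp add: algebra_simps)
    also have "e * e = 1" unfolding e_def by (rule ee)
    finally have "(- e * poly H (\<rho> k)) * (e * poly H (\<rho> (Suc k))) = - (poly H (\<rho> k) * poly H (\<rho> (Suc k)))" by simp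
    moreover have "(- e * poly H (\<rho> k)) * (e * poly H (\<rho> (Suc k))) > 0" by (rule mult_pos_pos[OF a b])
    ultimately show ?thesis by linarith
  qed
  have right: "poly H (\<rho> m) < 0" using sg[of m] m by simp
  have left: "(-1)^n * poly H (\<rho> 0) > 0" using sg[of 0] m by simp
  obtain N where N: "\<And>x. x \<ge> N \<Longrightarrow> poly H x \<ge> 1"
    using poly_pinfty_gt_lc[of H] lead_He unfolding H_def by auto
  define X where "X = max N (\<bar>\<rho> 0\<bar> + \<bar>\<rho> m\<bar> + 1)"
  have XN: "poly H X \<ge> 1" using N X_def by simp
  have X1: "\<rho> m < X" "- X < \<rho> 0" unfolding X_def by auto
  have par: "poly H (-X) = (-1)^(Suc n) * poly H X" unfolding H_def by (rule He_parity)
  have leftp: "poly H (-X) * poly H (\<rho> 0) < 0"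
  proof -
    have "poly H (-X) * poly H (\<rho> 0) = - (poly H X * ((-1)^n * poly H (\<rho> 0)))"
      unfolding par by simp
    moreover have "poly H X * ((-1)^n * poly H (\<rho> 0)) > 0" using XN left by simp
    ultimately show ?thesis by linarith
  qed
  have rightp: "poly H (\<rho> m) * poly H X < 0" using right XN by (simp add: mult_neg_pos)
  define lo where "lo i = (if i = 0 then -X else \<rho> (i - 1))" for i
  define hi where "hi i = (if i = n then X else \<rho> i)" for i
  have iv: "lo i < hi i \<and> poly H (lo i) * poly H (hi i) < 0" if i: "i \<le> n" for i
  proof (cases "i = 0")
    case True
    then show ?thesis using leftp X1 m by (simp add: lo_def hi_def)
  next
    case False
    show ?thesis
    proof (cases "i = n")
      case True
      then show ?thesis using rightp X1 m False by (simp add: lo_def hi_def)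
    next
      case F2: False
      then obtain k where k: "i = Suc k" "Suc k < n" using False i by (cases i) auto
      then show ?thesis using mid[OF k(2)] inc[of k "Suc k"] F2 by (simp add: lo_def hi_def)
    qed
  qed
  have "\<forall>i. \<exists>x. i \<le> n \<longrightarrow> lo i < x \<and> x < hi i \<and> poly H x = 0"
    using iv poly_IVT by blast
  then obtain z where z: "\<And>i. i \<le> n \<Longrightarrow> lo i < z i \<and> z i < hi i \<and> poly H (z i) = 0"
    by metis
  have zinc: "z i < z j" if ij: "i < j" "j < Suc n" for i j
  proof -
    have "hi i = \<rho> i" using ij by (simp add: hi_def)
    moreover have "lo j = \<rho> (j - 1)" using ij by (simp add: lo_def)
    moreover have "\<rho> i \<le> \<rho> (j - 1)"
    proof (cases "i = j - 1")
      case False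
      then have "i < j - 1" "j - 1 < n" using ij by auto
      then show ?thesis using inc[of i "j - 1"] by simp
    qed simp
    ultimately show ?thesis using z[of i] z[of j] ij by fastforce
  qed
  have "H = (\<Prod>i<Suc n. [:-z i,1:])"
    by (rule roots_char) (use zinc z lead_He degree_He in \<open>auto simp: H_def\<close>)
  then show ?case unfolding H_def using zinc by blast
qed


lemma coeff_prod_top: "coeff (\<Prod>i<n. [:-\<rho> i,1:]) n = (1::real)"
proof -
  have "lead_coeff (\<Prod>i<n. [:-\<rho> i,1:]) = 1" by (simp add: lead_coeff_prod)
  moreover have "degree (\<Prod>i<n. [:-\<rho> i,1::real:]) = n" by (simp add: degree_prod_eq_sum_degree)
  ultimately show ?thesis by simp
qed

lemma coeff_prod_sub: "coeff (\<Prod>i<Suc n. [:-\<rho> i,1:]) n = - (\<Sum>i<Suc n. (\<rho> i::real))"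
proof (induction n)
  case 0 then show ?case by simp
next
  case (Suc n)
  have "(\<Prod>i<Suc (Suc n). [:-\<rho> i,1:]) = [:-\<rho> (Suc n),1:] * (\<Prod>i<Suc n. [:-\<rho> i,1:])"
    by (simp add: mult.commute)
  then have "coeff (\<Prod>i<Suc (Suc n). [:-\<rho> i,1:]) (Suc n) = - \<rho> (Suc n) * coeff (\<Prod>i<Suc n. [:-\<rho> i,1:]) (Suc n) + coeff (\<Prod>i<Suc n. [:-\<rho> i,1:]) n"
    by simp
  also have "\<dots> = - \<rho> (Suc n) - (\<Sum>i<Suc n. \<rho> i)" using Suc coeff_prod_top[of \<rho> "Suc n"] by simp
  finally show ?case by simp
qed

lemma prod_scale:
  fixes \<rho> :: "nat \<Rightarrow> real"
  assumes c: "c \<noteq> 0"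
  shows "pcompose (\<Prod>i<n. [:-\<rho> i,1:]) [:0,c:] = smult (c^n) (\<Prod>i<n. [:-(\<rho> i / c),1:])"
proof -
  have "pcompose (\<Prod>i<n. [:-\<rho> i,1:]) [:0,c:] = (\<Prod>i<n. smult c [:-(\<rho> i / c),1:])"
    unfolding pcompose_prod by (rule prod.cong[OF refl]) (use c in \<open>simp add: pcompose_pCons\<close>)
  also have "\<dots> = smult (c^n) (\<Prod>i<n. [:-(\<rho> i / c),1:])" by (simp only: prod_smult prod_constant card_lessThan)
  finally show ?thesis .
qed

lemma herm_setup:
  assumes n2: "2 \<le> n"
  shows "(\<forall>i j. i < j \<longrightarrow> j < n \<longrightarrow> herm_norm n i < herm_norm n j) \<and>
    ffconv n (root_poly n (herm_norm n)) (root_poly n (herm_norm n))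
       = (\<Prod>i<n. [:-(sqrt 2 * herm_norm n i),1:])"
proof -
  obtain \<rho> :: "nat \<Rightarrow> real" where inc: "\<And>i j. i < j \<Longrightarrow> j < n \<Longrightarrow> \<rho> i < \<rho> j"
    and P: "hermite_He n = (\<Prod>i<n. [:-\<rho> i,1:])" using He_roots[of n] n2 by auto
  have sr: "sorted_roots (hermite_He n) i = \<rho> i" if "i < n" for i
    unfolding P using sorted_roots_prod[OF inc that] .
  obtain m where m: "n = Suc m" using n2 by (cases n) auto
  have "coeff (hermite_He n) (n - 1) = 0" unfolding He_Gp using n2 by (intro coeff_Gp_pred) simp
  then have "coeff (\<Prod>i<Suc m. [:-\<rho> i,1:]) m = 0" using P m by (simp only: diff_Suc_1)
  then have s0: "(\<Sum>i<n. \<rho> i) = 0" using coeff_prod_sub[of \<rho> m] unfolding m by linarith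
  have "(\<Sum>i<n. (\<rho> i)^2) \<ge> (\<Sum>i\<in>{0,1}. (\<rho> i)^2)"
    by (rule sum_mono2) (use n2 in auto)
  moreover have "\<rho> 0 \<noteq> 0 \<or> \<rho> 1 \<noteq> 0" using inc[of 0 1] n2 by auto
  then have "(\<rho> 0)^2 + (\<rho> 1)^2 > 0" by (simp add: sum_power2_gt_zero_iff)
  ultimately have vpos: "(\<Sum>i<n. (\<rho> i)^2) > 0" by simp
  define c where "c = sqrt ((\<Sum>i<n. (\<rho> i)^2) / real n)"
  have cpos: "c > 0" unfolding c_def using vpos n2 by simp
  have hn: "herm_norm n i = \<rho> i / c" if "i < n" for i
  proof -
    have "(\<Sum>i<n. sorted_roots (hermite_He n) i) = 0" using s0 sr by simp
    moreover have "(\<Sum>i<n. (sorted_roots (hermite_He n) i - 0)^2) = (\<Sum>i<n. (\<rho> i)^2)" using sr by simp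
    ultimately show ?thesis unfolding herm_norm_def Let_def c_def using sr that by simp
  qed
  define h where "h = herm_norm n"
  have hinc: "\<And>i j. i < j \<Longrightarrow> j < n \<Longrightarrow> h i < h j"
    using inc hn cpos unfolding h_def by (simp add: divide_strict_right_mono)
  define R where "R = root_poly n h"
  have R: "R = (\<Prod>i<n. [:-(\<rho> i / c),1:])"
    unfolding R_def root_poly_def h_def by (rule prod.cong[OF refl]) (simp add: hn)
  define a where "a = -1/2 / c^2"
  have e1: "pcompose (hermite_He n) [:0,c:] = smult (c^n) R"
    unfolding P R by (rule prod_scale) (use cpos in simp)
  have e2: "pcompose (hermite_He n) [:0,c:] = smult (c^n) (Gp n a)"
    unfolding He_Gp a_def by (rule Gp_scale) (use cpos in simp)
  have "smult (c^n) R = smult (c^n) (Gp n a)" using trans[OF e1[symmetric] e2] .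
  then have RG: "R = Gp n a" by (rule smult_cancel[rotated]) (use cpos in simp)
  define A where "A = ffconv n R R"
  have AG: "A = Gp n (a + a)" unfolding A_def RG by (rule Gp_add)
  have Ascale: "pcompose A [:0, sqrt 2:] = smult (sqrt 2 ^ n) R"
    unfolding AG RG by (subst Gp_scale) simp_all
  have Aroot: "poly A (sqrt 2 * h i) = 0" if "i < n" for i
  proof -
    have "poly A (sqrt 2 * h i) = poly (pcompose A [:0, sqrt 2:]) (h i)" by (simp add: poly_pcompose mult.commute)
    also have "\<dots> = sqrt 2 ^ n * poly R (h i)" unfolding Ascale by simp
    also have "poly R (h i) = 0" unfolding R_def root_poly_def poly_prod using that
      by (subst prod_zero_iff) auto
    finally show ?thesis by simp
  qed
  have "A = (\<Prod>i<n. [:-(sqrt 2 * h i),1:])"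
    by (rule roots_char) (use Aroot hinc in \<open>auto simp: AG lead_Gp degree_Gp coeff_Gp_n\<close>)
  then show ?thesis using hinc unfolding A_def R_def h_def by blast
qed


lemma F_props:
  fixes B :: "real poly"
  assumes A: "A = (\<Prod>i<n. [:-y i,1:])" and dB: "degree B \<le> n" "coeff B n = 0"
  shows "lead_coeff (A - smult t B) = 1 \<and> degree (A - smult t B) = n"
proof -
  have dA: "degree A = n" unfolding A by (simp add: degree_prod_eq_sum_degree)
  have cA: "coeff A n = 1" unfolding A by (rule coeff_prod_top)
  have c: "coeff (A - smult t B) n = 1" using cA dB by simp
  have "degree (A - smult t B) \<le> n"
    using dA dB degree_diff_le[of A n "smult t B"] degree_smult_le[of t B] by linarith
  moreover have "n \<le> degree (A - smult t B)" using c by (intro le_degree) simp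
  ultimately have "degree (A - smult t B) = n" by simp
  then show ?thesis using c by simp
qed

lemma Q_sign:
  fixes y :: "nat \<Rightarrow> real"
  assumes inc: "\<And>i j. i < j \<Longrightarrow> j < n \<Longrightarrow> y i < y j"
    and gap: "\<And>i j. i < j \<Longrightarrow> j < n \<Longrightarrow> 2 * d \<le> y j - y i"
    and k: "k < n" and x1: "\<bar>x1 - y k\<bar> < 2 * d" and x2: "\<bar>x2 - y k\<bar> < 2 * d"
  shows "poly (\<Prod>l\<in>{..<n}-{k}. [:-y l,1:]) x1 * poly (\<Prod>l\<in>{..<n}-{k}. [:-y l,1:]) x2 > 0"
proof -
  have "poly (\<Prod>l\<in>{..<n}-{k}. [:-y l,1:]) x1 * poly (\<Prod>l\<in>{..<n}-{k}. [:-y l,1:]) x2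
      = (\<Prod>l\<in>{..<n}-{k}. (x1 - y l) * (x2 - y l))"
    by (simp add: poly_prod prod.distrib)
  also have "\<dots> > 0"
  proof (rule prod_pos)
    fix l assume l: "l \<in> {..<n}-{k}"
    show "(x1 - y l) * (x2 - y l) > 0"
    proof (cases "l < k")
      case True
      then have "2 * d \<le> y k - y l" using gap k by simp
      then have "x1 - y l > 0" "x2 - y l > 0" using x1 x2 by auto
      then show ?thesis by simp
    next
      case False
      then have "k < l" "l < n" using l by auto
      then have "2 * d \<le> y l - y k" using gap by simp
      then have "x1 - y l < 0" "x2 - y l < 0" using x1 x2 by auto
      then show ?thesis by (simp add: mult_neg_neg)
    qed
  qed
  finally show ?thesis .
qed

lemma A_split:
  fixes y :: "nat \<Rightarrow> real"
  assumes k: "k < n"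
  shows "(\<Prod>i<n. [:-y i,1:]) = [:-y k,1:] * (\<Prod>l\<in>{..<n}-{k}. [:-y l,1:])"
  using k by (simp add: prod.remove)

lemma roots_in_boxes:
  fixes y :: "nat \<Rightarrow> real" and F :: "real poly"
  assumes inc: "\<And>i j. i < j \<Longrightarrow> j < n \<Longrightarrow> y i < y j"
    and gap: "\<And>i j. i < j \<Longrightarrow> j < n \<Longrightarrow> 2 * d \<le> y j - y i"
    and F: "lead_coeff F = 1" "degree F = n"
    and e: "0 < e" "e \<le> d"
    and sg: "\<And>k. k < n \<Longrightarrow> poly F (y k - e) * poly F (y k + e) < 0"
    and i: "i < n"
  shows "\<bar>sorted_roots F i - y i\<bar> < e \<and> poly F (sorted_roots F i) = 0"
proof -
  have "\<forall>k. \<exists>z. k < n \<longrightarrow> y k - e < z \<and> z < y k + e \<and> poly F z = 0"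
  proof
    fix k show "\<exists>z. k < n \<longrightarrow> y k - e < z \<and> z < y k + e \<and> poly F z = 0"
    proof (cases "k < n")
      case True
      obtain z where "z > y k - e" "z < y k + e" "poly F z = 0"
        using poly_IVT[of "y k - e" "y k + e" F] sg[OF True] e by auto
      then show ?thesis by blast
    qed simp
  qed
  then obtain z where z: "\<And>k. k < n \<Longrightarrow> y k - e < z k \<and> z k < y k + e \<and> poly F (z k) = 0"
    by metis
  have zinc: "z k < z l" if "k < l" "l < n" for k l
    using z[of k] z[of l] gap[OF that] that e by force
  have "F = (\<Prod>k<n. [:-z k,1:])"
    by (rule roots_char) (use F zinc z in auto)
  then have "sorted_roots F i = z i" using sorted_roots_prod[OF zinc i] by simp
  then show ?thesis using z[OF i] by auto
qed

lemma local_root: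
  fixes y :: "nat \<Rightarrow> real" and A B :: "real poly"
  assumes inc: "\<And>i j. i < j \<Longrightarrow> j < n \<Longrightarrow> y i < y j"
    and A: "A = (\<Prod>i<n. [:-y i,1:])"
    and dB: "degree B \<le> n" "coeff B n = 0"
    and i: "i < n"
  shows "((\<lambda>t. sorted_roots (A - smult t B) i) has_real_derivative
            (poly B (y i) / poly (\<Prod>l\<in>{..<n}-{i}. [:-y l,1:]) (y i))) (at 0)"
proof -
  define F where "F t = A - smult t B" for t
  define w where "w t = sorted_roots (F t) i" for t
  define Q where "Q k = (\<Prod>l\<in>{..<n}-{k}. [:-y l,1:])" for k
  have Fp1: "lead_coeff (F t) = 1" for t unfolding F_def using F_props[OF A dB] by blast
  have Fp2: "degree (F t) = n" for t unfolding F_def using F_props[OF A dB] by blast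
  note Fp = Fp1 Fp2
  define Dset where "Dset = {(k,l). k < l \<and> l < n}"
  have fin: "finite Dset" by (rule finite_subset[of _ "{..<n} \<times> {..<n}"]) (auto simp: Dset_def)
  define d where "d = Min (insert 1 ((\<lambda>(k,l). (y l - y k) / 2) ` Dset))"
  have dpos: "d > 0" unfolding d_def using fin inc by (auto simp: Dset_def)
  have gap: "2 * d \<le> y l - y k" if "k < l" "l < n" for k l
  proof -
    have "d \<le> (y l - y k) / 2" unfolding d_def using fin that by (intro Min_le) (auto simp: Dset_def)
    then show ?thesis by simp
  qed
  have Asp: "A = [:-y k,1:] * Q k" if "k < n" for k unfolding A Q_def using A_split[OF that] .
  have Asg: "poly A (y k - e) * poly A (y k + e) < 0" if k: "k < n" and e: "0 < e" "e \<le> d" for k e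
  proof -
    have q: "poly (Q k) (y k - e) * poly (Q k) (y k + e) > 0"
      unfolding Q_def by (rule Q_sign[OF inc gap k]) (use e in auto)
    have "poly A (y k - e) * poly A (y k + e) = - (e * e) * (poly (Q k) (y k - e) * poly (Q k) (y k + e))"
      unfolding Asp[OF k] by (simp add: algebra_simps)
    also have "\<dots> < 0" using q e by (simp add: mult_pos_pos)
    finally show ?thesis .
  qed
  have ev_sg: "eventually (\<lambda>t. \<forall>k\<in>{..<n}. poly (F t) (y k - e) * poly (F t) (y k + e) < 0) (at 0)"
    if e: "0 < e" "e \<le> d" for e
  proof (rule eventually_ball_finite)
    show "\<forall>k\<in>{..<n}. \<forall>\<^sub>F t in at 0. poly (F t) (y k - e) * poly (F t) (y k + e) < 0"
    proof
      fix k assume "k \<in> {..<n}"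
      then have k: "k < n" by simp
      have "((\<lambda>t. poly (F t) (y k - e) * poly (F t) (y k + e)) \<longlongrightarrow>
             (poly A (y k - e) - 0 * poly B (y k - e)) * (poly A (y k + e) - 0 * poly B (y k + e))) (at 0)"
        unfolding F_def by (simp only: poly_diff poly_smult) (intro tendsto_intros)
      then have "((\<lambda>t. poly (F t) (y k - e) * poly (F t) (y k + e)) \<longlongrightarrow>
             poly A (y k - e) * poly A (y k + e)) (at 0)" by simp
      then show "\<forall>\<^sub>F t in at 0. poly (F t) (y k - e) * poly (F t) (y k + e) < 0"
        using Asg[OF k e] by (rule order_tendstoD(2))
    qed
  qed simp
  have near: "eventually (\<lambda>t. \<bar>w t - y i\<bar> < e \<and> poly (F t) (w t) = 0) (at 0)"
    if e: "0 < e" "e \<le> d" for e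
    using ev_sg[OF e]
  proof (rule eventually_mono)
    fix t assume "\<forall>k\<in>{..<n}. poly (F t) (y k - e) * poly (F t) (y k + e) < 0"
    then have sg: "\<And>k. k < n \<Longrightarrow> poly (F t) (y k - e) * poly (F t) (y k + e) < 0" by auto
    show "\<bar>w t - y i\<bar> < e \<and> poly (F t) (w t) = 0"
      unfolding w_def using roots_in_boxes[OF inc gap Fp1[of t] Fp2[of t] e sg i] .
  qed
  have w0: "w 0 = y i" unfolding w_def F_def A using sorted_roots_prod[OF inc i] by simp
  have wlim: "(w \<longlongrightarrow> y i) (at 0)"
  proof (rule tendstoI)
    fix e :: real assume "e > 0"
    then have "eventually (\<lambda>t. \<bar>w t - y i\<bar> < min e d) (at 0)"
      using near[of "min e d"] dpos by (auto elim: eventually_mono)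
    then show "eventually (\<lambda>t. dist (w t) (y i) < e) (at 0)"
      by (rule eventually_mono) (simp add: dist_real_def)
  qed
  have "poly (Q i) (y i) * poly (Q i) (y i) > 0"
    unfolding Q_def by (rule Q_sign[OF inc gap i]) (use dpos in auto)
  then have Qy: "poly (Q i) (y i) \<noteq> 0" by auto
  have Qlim: "((\<lambda>t. poly (Q i) (w t)) \<longlongrightarrow> poly (Q i) (y i)) (at 0)"
    by (intro tendsto_intros wlim)
  have Blim: "((\<lambda>t. poly B (w t)) \<longlongrightarrow> poly B (y i)) (at 0)"
    by (intro tendsto_intros wlim)
  have ev: "eventually (\<lambda>t. poly B (w t) / poly (Q i) (w t) = (w t - w 0) / (t - 0)) (at 0)"
  proof -
    have e1: "eventually (\<lambda>t. poly (Q i) (w t) \<noteq> 0) (at 0)"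
      by (rule tendsto_imp_eventually_ne[OF Qlim Qy])
    have e2: "eventually (\<lambda>t. t \<noteq> 0) (at (0::real))" by (simp add: eventually_at_filter)
    have e3: "eventually (\<lambda>t. poly (F t) (w t) = 0) (at 0)"
      using near[of d] dpos by (auto elim: eventually_mono)
    show ?thesis using e1 e2 e3
    proof (eventually_elim)
      case (elim t)
      have "poly A (w t) = t * poly B (w t)" using elim(3) unfolding F_def by simp
      moreover have "poly A (w t) = (w t - y i) * poly (Q i) (w t)" unfolding Asp[OF i] by (simp add: algebra_simps)
      ultimately have "(w t - y i) * poly (Q i) (w t) = t * poly B (w t)" by simp
      then show ?case using elim(1,2) w0 by (simp add: field_simps)
    qed
  qed
  have "((\<lambda>t. (w t - w 0) / (t - 0)) \<longlongrightarrow> poly B (y i) / poly (Q i) (y i)) (at 0)"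
    using tendsto_divide[OF Blim Qlim Qy] ev by (rule Lim_transform_eventually)
  then have "(w has_real_derivative (poly B (y i) / poly (Q i) (y i))) (at 0)"
    by (simp add: has_field_derivative_iff)
  then show ?thesis unfolding w_def F_def Q_def .
qed


lemma log_deriv:
  fixes y :: "nat \<Rightarrow> real"
  assumes fin: "finite T" and ne: "\<And>l. l \<in> T \<Longrightarrow> x \<noteq> y l"
  shows "poly (pderiv (\<Prod>l\<in>T. [:-y l,1:])) x = poly (\<Prod>l\<in>T. [:-y l,1:]) x * (\<Sum>l\<in>T. 1 / (x - y l))"
proof -
  have "poly (pderiv (\<Prod>l\<in>T. [:-y l,1:])) x = (\<Sum>a\<in>T. \<Prod>l\<in>T-{a}. x - y l)"
    by (simp add: pderiv_prod poly_sum poly_prod pderiv_pCons)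
  also have "\<dots> = (\<Sum>a\<in>T. (\<Prod>l\<in>T. x - y l) * (1 / (x - y a)))"
  proof (rule sum.cong[OF refl])
    fix a assume a: "a \<in> T"
    have "(\<Prod>l\<in>T. x - y l) = (x - y a) * (\<Prod>l\<in>T-{a}. x - y l)" using fin a by (simp add: prod.remove)
    then show "(\<Prod>l\<in>T-{a}. x - y l) = (\<Prod>l\<in>T. x - y l) * (1 / (x - y a))" using ne[OF a] by simp
  qed
  also have "\<dots> = poly (\<Prod>l\<in>T. [:-y l,1:]) x * (\<Sum>l\<in>T. 1 / (x - y l))"
    by (simp add: poly_prod sum_distrib_left)
  finally show ?thesis .
qed

lemma aux2: "(u::real) \<noteq> v \<Longrightarrow> 1/(u - v) * ((x - v) * r) + 1/(v - u) * ((x - u) * r) = r"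
proof -
  assume "u \<noteq> v"
  then have a: "u - v \<noteq> 0" "v - u \<noteq> 0" by auto
  have "1/(v - u) = - (1/(u - v))" by (metis minus_diff_eq divide_minus_right)
  then have "1/(u - v) * ((x - v) * r) + 1/(v - u) * ((x - u) * r) = 1/(u-v) * (((x - v) - (x - u)) * r)"
    by (simp add: algebra_simps)
  also have "\<dots> = r" using a by simp
  finally show ?thesis .
qed

lemma score_identity:
  fixes h :: "nat \<Rightarrow> real"
  assumes inj: "\<And>i j. i < n \<Longrightarrow> j < n \<Longrightarrow> i \<noteq> j \<Longrightarrow> h i \<noteq> h j"
  shows "(\<Sum>j<n. smult (\<Sum>k\<in>{..<n}-{j}. 1 / (h j - h k)) (\<Prod>l\<in>{..<n}-{j}. [:-h l,1:]))
       = smult (1/2) (pderiv (pderiv (\<Prod>l<n. [:-h l,1:])))"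
proof -
  define S where "S = {..<n}"
  define Rj where "Rj j = (\<Prod>l\<in>S-{j}. [:-h l,1:])" for j
  define Rjk where "Rjk j k = (\<Prod>l\<in>S-{j,k}. [:-h l,1:])" for j k
  define f where "f j k = (if k = j then 0 else smult (1 / (h j - h k)) (Rj j))" for j k
  define g where "g j k = (if k = j then 0 else Rjk j k)" for j k
  have fin: "finite S" unfolding S_def by simp
  have RjS: "Rj j = [:-h k,1:] * Rjk j k" if "k \<in> S" "k \<noteq> j" for j k
  proof -
    have "Rj j = [:-h k,1:] * (\<Prod>l\<in>S-{j}-{k}. [:-h l,1:])"
      unfolding Rj_def using that fin by (simp add: prod.remove)
    moreover have "S-{j}-{k} = S-{j,k}" by auto
    ultimately show ?thesis unfolding Rjk_def by simp
  qed
  have Rjk_sym: "Rjk j k = Rjk k j" for j k unfolding Rjk_def by (simp add: insert_commute)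
  have pair: "f j k + f k j = g j k" if "j \<in> S" "k \<in> S" for j k
  proof (cases "k = j")
    case False
    have hne: "h j - h k \<noteq> 0" using inj that False unfolding S_def by auto
    have "f j k + f k j = smult (1 / (h j - h k)) ([:-h k,1:] * Rjk j k) + smult (1 / (h k - h j)) ([:-h j,1:] * Rjk j k)"
      unfolding f_def using False RjS[of k j] RjS[of j k] that Rjk_sym[of k j] by simp
    also have "\<dots> = Rjk j k"
    proof (rule poly_ext)
      fix x
      have hne': "h k - h j \<noteq> 0" using hne by simp
      show "poly (smult (1 / (h j - h k)) ([:-h k,1:] * Rjk j k) + smult (1 / (h k - h j)) ([:-h j,1:] * Rjk j k)) x = poly (Rjk j k) x"
      proof -
        have "poly (smult (1 / (h j - h k)) ([:-h k,1:] * Rjk j k) + smult (1 / (h k - h j)) ([:-h j,1:] * Rjk j k)) x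
          = 1/(h j - h k) * ((x - h k) * poly (Rjk j k) x) + 1/(h k - h j) * ((x - h j) * poly (Rjk j k) x)" by (simp add: algebra_simps)
        also have "\<dots> = poly (Rjk j k) x" using hne by (intro aux2) simp
        finally show ?thesis .
      qed
    qed
    finally show ?thesis unfolding g_def using False by simp
  qed (simp add: f_def g_def)
  have L: "(\<Sum>j<n. smult (\<Sum>k\<in>{..<n}-{j}. 1 / (h j - h k)) (\<Prod>l\<in>{..<n}-{j}. [:-h l,1:])) = (\<Sum>j\<in>S. \<Sum>k\<in>S. f j k)"
  proof -
    have "smult (\<Sum>k\<in>S-{j}. 1 / (h j - h k)) (Rj j) = (\<Sum>k\<in>S. f j k)" if "j \<in> S" for j
    proof -
      have "(\<Sum>k\<in>S. f j k) = (\<Sum>k\<in>S-{j}. f j k)"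
        using fin that by (subst sum.remove[of S j]) (auto simp: f_def)
      also have "\<dots> = (\<Sum>k\<in>S-{j}. smult (1 / (h j - h k)) (Rj j))"
        by (rule sum.cong) (auto simp: f_def)
      finally show ?thesis by (simp add: smult_sum)
    qed
    then show ?thesis unfolding S_def Rj_def by simp
  qed
  have R2: "pderiv (pderiv (\<Prod>l<n. [:-h l,1:])) = (\<Sum>j\<in>S. \<Sum>k\<in>S. g j k)"
  proof -
    have "pderiv (\<Prod>l<n. [:-h l,1:]) = (\<Sum>j\<in>S. Rj j)"
      unfolding S_def Rj_def by (simp add: pderiv_prod pderiv_pCons)
    moreover have "pderiv (Rj j) = (\<Sum>k\<in>S. g j k)" if "j \<in> S" for j
    proof -
      have "pderiv (Rj j) = (\<Sum>k\<in>S-{j}. Rjk j k)"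
        unfolding Rj_def Rjk_def by (simp add: pderiv_prod pderiv_pCons Diff_insert2[symmetric] insert_commute)
      also have "\<dots> = (\<Sum>k\<in>S. g j k)"
        using fin that by (subst sum.remove[of S j]) (auto simp: g_def intro: sum.cong)
      finally show ?thesis .
    qed
    ultimately show ?thesis by (simp add: pderiv_sum)
  qed
  have "(\<Sum>j\<in>S. \<Sum>k\<in>S. f j k) + (\<Sum>j\<in>S. \<Sum>k\<in>S. f j k) = (\<Sum>j\<in>S. \<Sum>k\<in>S. g j k)"
  proof -
    have "(\<Sum>j\<in>S. \<Sum>k\<in>S. f j k) = (\<Sum>j\<in>S. \<Sum>k\<in>S. f k j)" by (rule sum.swap)
    then have "(\<Sum>j\<in>S. \<Sum>k\<in>S. f j k) + (\<Sum>j\<in>S. \<Sum>k\<in>S. f j k) = (\<Sum>j\<in>S. \<Sum>k\<in>S. f j k + f k j)"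
      by (simp add: sum.distrib)
    also have "\<dots> = (\<Sum>j\<in>S. \<Sum>k\<in>S. g j k)" using pair by (auto intro!: sum.cong)
    finally show ?thesis .
  qed
  then have "smult 2 (\<Sum>j\<in>S. \<Sum>k\<in>S. f j k) = pderiv (pderiv (\<Prod>l<n. [:-h l,1:]))"
    unfolding R2 by (metis mult_2 smult_add_left smult_1_left one_add_one)
  then show ?thesis unfolding L by (metis smult_smult smult_1_left field_sum_of_halves mult_2 one_add_one
        divide_self_if zero_neq_numeral times_divide_eq_left nonzero_divide_eq_eq)
qed


lemma powr_half: "(2::real) powr (-1/2) = 1 / sqrt 2"
  by (simp add: powr_minus_divide powr_half_sqrt)

lemma main_aux:
  fixes n :: nat
  assumes n2: "n \<ge> 2"
  shows "(\<forall>i<n. \<forall>j<n.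
            (\<lambda>t. Omega n (perturb (herm_norm n) j t) (herm_norm n) i) differentiable (at 0))
       \<and> (\<forall>i<n. (\<Sum>j<n. hermite_coupling n i j * score n (herm_norm n) j)
                 = 2 powr (-1/2) * score n (herm_norm n) i)"
proof -
  define h where "h = herm_norm n"
  define y where "y i = sqrt 2 * h i" for i
  define S where "S = {..<n}"
  define R where "R = root_poly n h"
  define A where "A = ffconv n R R"
  define Rj where "Rj j = (\<Prod>l\<in>S-{j}. [:-h l,1:])" for j
  define B where "B j = ffconv n (Rj j) R" for j
  define Q where "Q i = (\<Prod>l\<in>S-{i}. [:-y l,1:])" for i
  have hinc: "\<And>i j. i < j \<Longrightarrow> j < n \<Longrightarrow> h i < h j" and Aeq: "A = (\<Prod>i<n. [:-y i,1:])"
    using herm_setup[OF n2] unfolding h_def A_def R_def y_def by auto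
  have yinc: "y i < y j" if "i < j" "j < n" for i j unfolding y_def using hinc[OF that] by simp
  have Rprod: "R = (\<Prod>l<n. [:-h l,1:])" unfolding R_def root_poly_def ..
  have dR: "degree R = n" unfolding Rprod by (simp add: degree_prod_eq_sum_degree)
  have dR1: "degree (pderiv R) \<le> n" using dR by (simp add: degree_pderiv)
  have dR2: "degree (pderiv (pderiv R)) \<le> n" using dR by (simp add: degree_pderiv)
  have cRj: "coeff (Rj j) n = 0" if "j < n" for j
  proof -
    have "degree (Rj j) = n - 1" unfolding Rj_def S_def using that by (simp add: degree_prod_eq_sum_degree)
    then show ?thesis using that by (intro coeff_eq_0) simp
  qed
  have RjR: "R = [:-h j,1:] * Rj j" if "j < n" for j
    unfolding Rprod Rj_def S_def using A_split[OF that] .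
  have pert: "root_poly n (perturb h j t) = R - smult t (Rj j)" if j: "j < n" for j t
  proof -
    have "root_poly n (perturb h j t) = [:-(perturb h j t j),1:] * (\<Prod>l\<in>S-{j}. [:-(perturb h j t l),1:])"
      unfolding root_poly_def S_def using A_split[OF j] .
    also have "(\<Prod>l\<in>S-{j}. [:-(perturb h j t l),1:]) = Rj j"
      unfolding Rj_def by (rule prod.cong) (auto simp: perturb_def)
    also have "[:-(perturb h j t j),1:] = [:-h j,1:] - [:t:]" by (simp add: perturb_def)
    also have "([:-h j,1:] - [:t:]) * Rj j = R - smult t (Rj j)"
      unfolding RjR[OF j] left_diff_distrib by simp
    finally show ?thesis .
  qed
  have dB: "degree (B j) \<le> n" "coeff (B j) n = 0" if "j < n" for j
    unfolding B_def using degree_ffconv coeff_ffconv_n cRj[OF that] by auto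
  have Om: "Omega n (perturb h j t) h i = sorted_roots (A - smult t (B j)) i" if "j < n" for i j t
    unfolding Omega_def pert[OF that] A_def B_def R_def[symmetric]
    using dR by (simp add: ffconv_diff ffconv_smult)
  have D: "((\<lambda>t. Omega n (perturb h j t) h i) has_real_derivative (poly (B j) (y i) / poly (Q i) (y i))) (at 0)"
    if i: "i < n" and j: "j < n" for i j
  proof -
    have "(\<lambda>t. Omega n (perturb h j t) h i) = (\<lambda>t. sorted_roots (A - smult t (B j)) i)"
      using Om[OF j] by auto
    then show ?thesis unfolding Q_def S_def using local_root[OF yinc Aeq dB[OF j] i] by simp
  qed
  have part1: "\<forall>i<n. \<forall>j<n. (\<lambda>t. Omega n (perturb h j t) h i) differentiable (at 0)"
    using D unfolding differentiable_def has_field_derivative_def by blast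
  have part2: "(\<Sum>j<n. hermite_coupling n i j * score n h j) = 2 powr (-1/2) * score n h i"
    if i: "i < n" for i
  proof -
    have hc: "hermite_coupling n i j = poly (B j) (y i) / poly (Q i) (y i)" if j: "j < n" for j
      unfolding hermite_coupling_def h_def[symmetric] using D[OF i j] by (rule DERIV_imp_deriv)
    have ne: "y i \<noteq> y l" if "l \<in> S-{i}" for l
      using that yinc[of i l] yinc[of l i] i unfolding S_def by (cases "i < l") auto
    have Qne: "poly (Q i) (y i) \<noteq> 0" unfolding Q_def poly_prod
      by (subst prod_zero_iff) (use ne in \<open>auto simp: S_def\<close>)
    have sc: "(\<Sum>j<n. smult (score n h j) (Rj j)) = smult (1/2) (pderiv (pderiv R))"
      unfolding score_def Rj_def S_def Rprod
      by (rule score_identity) (use hinc in \<open>metis linorder_neqE_nat less_irrefl\<close>)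
    have "(\<Sum>j<n. smult (score n h j) (B j)) = ffconv n (\<Sum>j<n. smult (score n h j) (Rj j)) R"
      unfolding B_def using dR by (simp add: ffconv_sum ffconv_smult)
    also have "\<dots> = smult (1/2) (pderiv (pderiv A))"
      unfolding sc A_def using dR dR1 dR2 by (simp add: ffconv_smult ffconv_pderiv)
    finally have SB: "(\<Sum>j<n. smult (score n h j) (B j)) = smult (1/2) (pderiv (pderiv A))" .
    have AQ: "A = [:-y i,1:] * Q i" unfolding Aeq Q_def S_def using A_split[OF i] .
    have A2: "poly (pderiv (pderiv A)) (y i) = 2 * poly (pderiv (Q i)) (y i)"
    proof -
      have pl: "pderiv [:-y i,1:] = 1" by (simp add: pderiv_pCons)
      have d1: "pderiv A = [:-y i,1:] * pderiv (Q i) + Q i" unfolding AQ pderiv_mult pl by simp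
      have d2: "pderiv (pderiv A) = [:-y i,1:] * pderiv (pderiv (Q i)) + pderiv (Q i) + pderiv (Q i)"
        unfolding d1 pderiv_add pderiv_mult pl by simp
      show ?thesis unfolding d2 by simp
    qed
    have LD: "poly (pderiv (Q i)) (y i) = poly (Q i) (y i) * (\<Sum>l\<in>S-{i}. 1 / (y i - y l))"
      unfolding Q_def by (rule log_deriv) (use ne in \<open>auto simp: S_def\<close>)
    have "(\<Sum>j<n. hermite_coupling n i j * score n h j) = (\<Sum>j<n. score n h j * poly (B j) (y i)) / poly (Q i) (y i)"
      by (simp add: hc sum_divide_distrib mult.commute)
    also have "(\<Sum>j<n. score n h j * poly (B j) (y i)) = poly (\<Sum>j<n. smult (score n h j) (B j)) (y i)"
      by (simp add: poly_sum)
    also have "\<dots> = poly (Q i) (y i) * (\<Sum>l\<in>S-{i}. 1 / (y i - y l))"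
      unfolding SB by (simp add: A2 LD)
    also have "(\<Sum>l\<in>S-{i}. 1 / (y i - y l)) = 1 / sqrt 2 * score n h i"
      unfolding score_def S_def y_def sum_distrib_left
      by (rule sum.cong[OF refl]) (simp add: right_diff_distrib[symmetric])
    finally have X: "(\<Sum>j<n. hermite_coupling n i j * score n h j) = poly (Q i) (y i) * (1 / sqrt 2 * score n h i) / poly (Q i) (y i)" .
    show ?thesis unfolding powr_half X using Qne by simp
  qed
  show ?thesis using part1 part2 unfolding h_def by blast
qed

theorem mainTheorem2:
  fixes n :: nat
  assumes "n \<ge> 2"
  shows "(\<forall>i<n. \<forall>j<n.
            (\<lambda>t. Omega n (perturb (herm_norm n) j t) (herm_norm n) i) differentiable (at 0))
       \<and> (\<forall>i<n. (\<Sum>j<n. hermite_coupling n i j * score n (herm_norm n) j)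
                 = 2 powr (-1/2) * score n (herm_norm n) i)"
  using main_aux[OF assms] .

end
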